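(* Let $q\ge1$, $\alpha\in(0,q)$, $K\ge0$ and $l\in\{1,\dots,q\}$. There is a constant $C=C(\alpha,q,K)<\infty$ such that for all $x,x'\in\mathbb R^q$ and $0<t\le t'\le K$, $$\int\!\!\int\big|(p_{t,l}(w-x)-p_{t',l}(w-x'))(p_{t,l}(z-x)-p_{t',l}(z-x'))\big|\,(|w-z|^{-\alpha}+1)\,dw\,dz\le C\,t^{-1-\alpha/2}\Big(1\wedge\frac{|x-x'|^2+|t-t'|}{t}\Big),$$ where the integrals are over $\mathbb R^q$.
   Context: $p_t(x)=(2\pi t)^{-q/2}\exp(-|x|^2/(2t))$ is the heat kernel on $\mathbb R^q$ and $p_{t,l}(x)=\partial_{x_l}p_t(x)=-\frac{x_l}{t}p_t(x)$. *)

theory Defs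
  imports "HOL-Analysis.Analysis"
begin

definition heat_kernel :: "real \<Rightarrow> real^'q \<Rightarrow> real" where
  "heat_kernel t x = (2 * pi * t) powr (- real CARD('q) / 2) * exp (- (norm x)\<^sup>2 / (2 * t))"

text \<open>Spatial partial derivative in coordinate l: p_{t,l}(x) = -(x_l / t) p_t(x).\<close>
definition heat_kernel_deriv :: "real \<Rightarrow> 'q \<Rightarrow> real^'q \<Rightarrow> real" where
  "heat_kernel_deriv t l x = - (x $ l / t) * heat_kernel t x"

end

theory Submission
  imports Defs "HOL-Analysis.Analysis"
begin

lemma scale_nn:
  fixes g :: "real^'q::finite \<Rightarrow> ennreal" and x :: "real^'q"
  assumes g[measurable]: "g \<in> borel_measurable borel" and c: "0 < c"
  shows "(\<integral>\<^sup>+w. g (inverse c *\<^sub>R (w - x)) \<partial>lborel) = ennreal (c ^ CARD('q)) * (\<integral>\<^sup>+u. g u \<partial>lborel)"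
proof -
  have cne: "c \<noteq> 0" using c by simp
  have "(\<integral>\<^sup>+w. g (inverse c *\<^sub>R (w - x)) \<partial>lborel) =
     (\<integral>\<^sup>+w. g (inverse c *\<^sub>R (w - x)) \<partial>(density (distr lborel borel (\<lambda>u. x + c *\<^sub>R u)) (\<lambda>_. \<bar>c\<bar>^DIM(real^'q))))"
    by (subst (1) lborel_affine[OF cne, of x]) (rule refl)
  also have "\<dots> = ennreal (c ^ CARD('q)) * (\<integral>\<^sup>+u. g u \<partial>lborel)"
    using c by (simp add: nn_integral_density nn_integral_distr nn_integral_cmult)
  finally show ?thesis .
qed


lemma dyadic_down:
  fixes v :: real assumes "0 < v" "v < 1"
  shows "\<exists>n::nat. (1/2)^(Suc n) < v \<and> v \<le> (1/2)^n"
proof -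
  define k where "k = \<lfloor>log 2 (1/v)\<rfloor>"
  have lv: "log 2 (1/v) > 0" using assms by simp
  have k0: "k \<ge> 0" using lv unfolding k_def by simp
  have "2 powr k \<le> 2 powr (log 2 (1/v))" unfolding k_def by (intro powr_mono) auto
  hence a: "2 powr k \<le> 1/v" using assms by simp
  have "2 powr (log 2 (1/v)) < 2 powr (k+1)" unfolding k_def
    by (intro powr_less_mono) linarith+
  hence b: "1/v < 2 powr (k+1)" using assms by simp
  have e1: "2 powr (real_of_int k) = 2 ^ nat k" using k0 by (simp add: powr_realpow[symmetric] powr_add)
  have e2: "2 powr (real_of_int (k + 1)) = 2 ^ Suc (nat k)" using k0
    by (simp add: powr_realpow[symmetric] powr_add)
  show ?thesis
  proof (intro exI conjI)
    show "(1/2)^(Suc (nat k)) < v" using b e2 assms by (simp add: power_one_over field_simps)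
    show "v \<le> (1/2)^(nat k)" using a e1 assms by (simp add: power_one_over field_simps)
  qed
qed


lemma ennreal_term_le_suminf: "(f::nat \<Rightarrow> ennreal) n \<le> suminf f"
  using sum_le_suminf[OF summableI, of "{n}" f] by simp

lemma emeasure_cball_vec:
  assumes "r \<ge> 0"
  shows "emeasure lborel (cball (c::real^'q::finite) r) = ennreal (unit_ball_vol (real CARD('q)) * r ^ CARD('q))"
  using emeasure_cball[OF assms, where c=c] by simp

lemma riesz_finite:
  assumes a0: "0 < \<alpha>" and aq: "\<alpha> < real CARD('q::finite)"
  shows "(\<integral>\<^sup>+u. ennreal (indicator (ball (0::real^'q) 1) u * norm u powr (-\<alpha>)) \<partial>lborel) < \<infinity>"
proof -
  define V where "V = unit_ball_vol (real CARD('q))"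
  have V0: "V \<ge> 0" unfolding V_def by simp
  define b where "b k = 2 powr ((real k + 1) * \<alpha>)" for k :: nat
  define S where "S u = (\<Sum>k. ennreal (b k * indicator (cball (0::real^'q) ((1/2)^k)) u))" for u
  have pw: "ennreal (indicator (ball (0::real^'q) 1) u * norm u powr (-\<alpha>)) \<le> S u" for u
  proof (cases "u \<in> ball 0 1 \<and> u \<noteq> 0")
    case False
    then show ?thesis by (auto simp: indicator_def)
  next
    case True
    then have u0: "0 < norm u" "norm u < 1" by auto
    obtain n where n: "(1/2)^(Suc n) < norm u" "norm u \<le> (1/2)^n"
      using dyadic_down[OF u0] by blast
    have "norm u powr (-\<alpha>) \<le> ((1/2)^(Suc n)) powr (-\<alpha>)"
      using n(1) a0 by (intro powr_mono2') auto
    also have "((1/2::real)^(Suc n)) powr (-\<alpha>) = b n"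
      unfolding b_def
      by (simp add: powr_realpow[symmetric] powr_powr powr_minus_divide powr_divide field_simps)
        (simp add: powr_mult powr_powr powr_add algebra_simps)
    finally have le: "norm u powr (-\<alpha>) \<le> b n" .
    have "ennreal (indicator (ball (0::real^'q) 1) u * norm u powr (-\<alpha>)) \<le> ennreal (b n * indicator (cball (0::real^'q) ((1/2)^n)) u)"
      using True le n(2) by (auto simp: indicator_def intro: ennreal_leI)
    also have "\<dots> \<le> S u" unfolding S_def by (rule ennreal_term_le_suminf)
    finally show ?thesis .
  qed
  have "(\<integral>\<^sup>+u. ennreal (indicator (ball (0::real^'q) 1) u * norm u powr (-\<alpha>)) \<partial>lborel) \<le> (\<integral>\<^sup>+u. S u \<partial>lborel)"
    by (intro nn_integral_mono pw)
  also have "\<dots> = (\<Sum>k. (\<integral>\<^sup>+u. ennreal (b k * indicator (cball (0::real^'q) ((1/2)^k)) u) \<partial>lborel))"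
    unfolding S_def by (rule nn_integral_suminf) (measurable, simp add: pred_def borel_closed)
  also have "\<dots> = (\<Sum>k. ennreal (2 powr \<alpha> * V * (2 powr (\<alpha> - real CARD('q)))^k))"
  proof (intro suminf_cong)
    fix k :: nat
    have "(\<integral>\<^sup>+u. ennreal (b k * indicator (cball (0::real^'q) ((1/2)^k)) u) \<partial>lborel)
        = (\<integral>\<^sup>+u. ennreal (b k) * indicator (cball (0::real^'q) ((1/2)^k)) u \<partial>lborel)"
      by (intro nn_integral_cong) (auto simp: indicator_def)
    also have "\<dots> = ennreal (b k) * emeasure lborel (cball (0::real^'q) ((1/2)^k))"
      by (rule nn_integral_cmult_indicator) simp
    also have "\<dots> = ennreal (b k * (V * ((1/2)^k)^CARD('q)))"
      by (simp add: emeasure_cball_vec V_def ennreal_mult' b_def)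
    also have "b k * (V * ((1/2)^k)^CARD('q)) = 2 powr \<alpha> * V * (2 powr (\<alpha> - real CARD('q)))^k"
      unfolding b_def
      by (simp add: powr_realpow[symmetric] powr_powr powr_add powr_diff field_simps power_mult[symmetric] mult.commute)
    finally show "(\<integral>\<^sup>+u. ennreal (b k * indicator (cball (0::real^'q) ((1/2)^k)) u) \<partial>lborel) = ennreal (2 powr \<alpha> * V * (2 powr (\<alpha> - real CARD('q)))^k)" .
  qed
  also have "\<dots> < \<infinity>"
  proof -
    have r1: "2 powr (\<alpha> - real CARD('q)) < 1" using aq by (simp add: powr_less_one)
    have "summable (\<lambda>k. 2 powr \<alpha> * V * (2 powr (\<alpha> - real CARD('q)))^k)"
      using r1 by (intro summable_mult summable_geometric) simp
    then show ?thesis using V0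
      by (simp add: ennreal_suminf_neq_top less_top[symmetric])
  qed
  finally show ?thesis .
qed


lemma exp_ge_pow_fact:
  assumes "0 \<le> (x::real)" shows "x ^ N / fact N \<le> exp x"
proof -
  have s: "summable (\<lambda>n. x ^ n /\<^sub>R fact n)" using exp_converges[of x] by (rule sums_summable)
  have "(\<Sum>n\<in>{N}. x ^ n /\<^sub>R fact n) \<le> (\<Sum>n. x ^ n /\<^sub>R fact n)"
    by (rule sum_le_suminf[OF s]) (use assms in auto)
  also have "\<dots> = exp x" using exp_converges[of x] sums_unique by metis
  finally show ?thesis by (simp add: divide_inverse_commute)
qed

lemma poly_exp_bound:
  assumes r: "0 \<le> (\<rho>::real)"
  shows "(1+\<rho>)^N * exp (-\<rho>\<^sup>2/8) \<le> 16^N * fact N"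
proof -
  have main: "(1+\<rho>)^N \<le> 16^N * fact N * exp (\<rho>\<^sup>2/8)"
  proof (cases "\<rho> \<ge> 1")
    case True
    have "(1+\<rho>)^N \<le> (2*\<rho>)^N" using True r by (intro power_mono) auto
    also have "\<dots> = 2^N * \<rho>^N" by (simp add: power_mult_distrib)
    also have "\<rho>^N \<le> \<rho>^(2*N)" using True by (intro power_increasing) auto
    hence "2^N * \<rho>^N \<le> 2^N * \<rho>^(2*N)" by simp
    also have "\<rho>^(2*N) = 8^N * (fact N * ((\<rho>\<^sup>2/8)^N / fact N))"
      by (simp add: power_mult power_divide)
    also have "(\<rho>\<^sup>2/8)^N / fact N \<le> exp (\<rho>\<^sup>2/8)" by (rule exp_ge_pow_fact) simp
    hence "2^N * (8^N * (fact N * ((\<rho>\<^sup>2/8)^N / fact N))) \<le> 2^N * (8^N * (fact N * exp (\<rho>\<^sup>2/8)))"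
      by (intro mult_left_mono) auto
    also have "2^N * (8^N * (fact N * exp (\<rho>\<^sup>2/8))) = 16^N * fact N * exp (\<rho>\<^sup>2/8)"
      by (simp add: power_mult_distrib[symmetric])
    finally show ?thesis .
  next
    case False
    have "(1+\<rho>)^N \<le> 2^N" using False r by (intro power_mono) auto
    also have "(2::real)^N \<le> 16^N" by (intro power_mono) auto
    also have "(16::real)^N \<le> 16^N * fact N * exp (\<rho>\<^sup>2/8)"
    proof -
      have f1: "1 \<le> (fact N::real)" by (rule fact_ge_1)
      have e1: "1 \<le> exp (\<rho>\<^sup>2/8)" by simp
      have "1 \<le> fact N * exp (\<rho>\<^sup>2/8)"
        using mult_mono[OF f1 e1] by simp
      then show ?thesis by (simp add: mult.assoc)
    qed
    finally show ?thesis .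
  qed
  have "(1+\<rho>)^N * exp (-\<rho>\<^sup>2/8) \<le> 16^N * fact N * exp (\<rho>\<^sup>2/8) * exp (-\<rho>\<^sup>2/8)"
    using main by (intro mult_right_mono) auto
  also have "\<dots> = 16^N * fact N" by (simp add: exp_minus_inverse mult.assoc flip: exp_add)
  finally show ?thesis .
qed

definition G :: "real \<Rightarrow> real" where "G \<rho> = (1+\<rho>)^3 * exp (-\<rho>\<^sup>2/8)"

lemma G_nonneg: "0 \<le> \<rho> \<Longrightarrow> 0 \<le> G \<rho>" unfolding G_def by simp

lemma G_bound: "0 \<le> \<rho> \<Longrightarrow> G \<rho> \<le> 16^3 * fact 3" unfolding G_def by (rule poly_exp_bound)

lemma gauss_finite:
  shows "(\<integral>\<^sup>+u. ennreal (G (norm (u::real^'q::finite))) \<partial>lborel) < \<infinity>"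
proof -
  define q where "q = CARD('q)"
  define M :: real where "M = 16^(q+4) * fact (q+4)"
  have M0: "M \<ge> 0" unfolding M_def by simp
  define V where "V = unit_ball_vol (real CARD('q))"
  have V0: "V \<ge> 0" unfolding V_def by simp
  have GM: "G \<rho> \<le> M / (1+\<rho>)^(q+1)" if "0 \<le> \<rho>" for \<rho>
  proof -
    have e: "(q+4::nat) = 3 + (q+1)" by simp
    have "G \<rho> * (1+\<rho>)^(q+1) = (1+\<rho>)^(q+4) * exp (-\<rho>\<^sup>2/8)"
      unfolding G_def by (subst e, subst power_add) (simp only: mult_ac)
    also have "\<dots> \<le> M" unfolding M_def by (rule poly_exp_bound[OF that])
    finally have "G \<rho> * (1+\<rho>)^(q+1) \<le> M" .
    moreover have pos: "0 < (1+\<rho>)^(q+1)" using that by simp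
    ultimately show ?thesis by (subst pos_le_divide_eq[OF pos])
  qed
  define b where "b k = M * 2^(q+1) * (1/2)^(k*(q+1))" for k :: nat
  define S where "S u = (\<Sum>k. ennreal (b k * indicator (cball (0::real^'q) (2^k)) u))" for u
  have pw: "ennreal (G (norm u)) \<le> S u" for u :: "real^'q"
  proof (cases "norm u \<le> 1")
    case True
    have "G (norm u) \<le> M / (1 + norm u)^(q+1)" by (rule GM) simp
    also have "\<dots> \<le> M"
    proof -
      have o: "1 \<le> (1 + norm u)^(q+1)" by (rule one_le_power) simp
      have p0: "0 < 1 + norm u" by (smt (verit) norm_ge_zero)
      have p: "0 < (1 + norm u)^(q+1) * 1" by (simp only: mult_1_right) (rule zero_less_power[OF p0])
      have "M / (1 + norm u)^(q+1) \<le> M / 1" by (rule divide_left_mono[OF o M0 p])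
      thus ?thesis by simp
    qed
    also have "M \<le> b 0"
    proof -
      have "1 \<le> (2::real)^(q+1)" by (rule one_le_power) simp
      from mult_left_mono[OF this M0] show ?thesis unfolding b_def by simp
    qed
    finally have "ennreal (G (norm u)) \<le> ennreal (b 0 * indicator (cball (0::real^'q) (2^0)) u)"
      using True by (simp add: indicator_def ennreal_leI)
    also have "\<dots> \<le> S u" unfolding S_def by (rule ennreal_term_le_suminf)
    finally show ?thesis .
  next
    case False
    then have u0: "0 < 1 / norm u" "1 / norm u < 1" by (auto simp: divide_simps)
    obtain n where n: "(1/2)^(Suc n) < 1 / norm u" "1 / norm u \<le> (1/2)^n"
      using dyadic_down[OF u0] by blast
    have n1: "norm u < 2^(Suc n)"
    proof -
      have "inverse (1/norm u) < inverse ((1/2::real)^(Suc n))"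
        by (rule less_imp_inverse_less[OF n(1)]) simp
      thus ?thesis by (simp add: power_one_over)
    qed
    have n2: "2^n \<le> norm u"
    proof -
      have "inverse ((1/2::real)^n) \<le> inverse (1/norm u)"
        by (rule le_imp_inverse_le[OF n(2)]) (use u0 in simp)
      thus ?thesis by (simp add: power_one_over)
    qed
    have "G (norm u) \<le> M / (1 + norm u)^(q+1)" by (rule GM) simp
    also have "\<dots> \<le> M / (2^n)^(q+1)"
    proof -
      have p0: "0 < 1 + norm u" by (smt (verit) norm_ge_zero)
      have pm: "(2^n)^(q+1) \<le> (1+norm u)^(q+1)" by (rule power_mono) (use n2 in auto)
      show ?thesis
        by (rule divide_left_mono[OF pm M0]) (intro mult_pos_pos zero_less_power p0, simp)
    qed
    also have "\<dots> = b (Suc n)" unfolding b_def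
      by (simp add: power_one_over power_mult[symmetric] field_simps power_add mult.commute)
    finally have "ennreal (G (norm u)) \<le> ennreal (b (Suc n) * indicator (cball (0::real^'q) (2^Suc n)) u)"
      using n1 by (simp add: indicator_def ennreal_leI)
    also have "\<dots> \<le> S u" unfolding S_def by (rule ennreal_term_le_suminf)
    finally show ?thesis .
  qed
  have "(\<integral>\<^sup>+u. ennreal (G (norm (u::real^'q))) \<partial>lborel) \<le> (\<integral>\<^sup>+u. S u \<partial>lborel)"
    by (intro nn_integral_mono pw)
  also have "\<dots> = (\<Sum>k. (\<integral>\<^sup>+u. ennreal (b k * indicator (cball (0::real^'q) (2^k)) u) \<partial>lborel))"
    unfolding S_def by (rule nn_integral_suminf) (measurable, simp add: pred_def borel_closed)
  also have "\<dots> = (\<Sum>k. ennreal (M * 2^(q+1) * V * (1/2)^k))"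
  proof (intro suminf_cong)
    fix k :: nat
    have "(\<integral>\<^sup>+u. ennreal (b k * indicator (cball (0::real^'q) (2^k)) u) \<partial>lborel)
        = (\<integral>\<^sup>+u. ennreal (b k) * indicator (cball (0::real^'q) (2^k)) u \<partial>lborel)"
      by (intro nn_integral_cong) (auto simp: indicator_def)
    also have "\<dots> = ennreal (b k) * emeasure lborel (cball (0::real^'q) (2^k))"
      by (rule nn_integral_cmult_indicator) simp
    also have "\<dots> = ennreal (b k * (V * (2^k)^q))"
      using M0 by (simp add: emeasure_cball_vec V_def ennreal_mult' b_def q_def)
    also have "b k * (V * (2^k)^q) = M * 2^(q+1) * V * (1/2)^k"
      unfolding b_def
      by (simp add: power_one_over power_mult[symmetric] field_simps power_add mult.commute)
    finally show "(\<integral>\<^sup>+u. ennreal (b k * indicator (cball (0::real^'q) (2^k)) u) \<partial>lborel) = ennreal (M * 2^(q+1) * V * (1/2)^k)" .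
  qed
  also have "\<dots> < \<infinity>"
  proof -
    have "summable (\<lambda>k. M * 2^(q+1) * V * (1/2::real)^k)"
      by (intro summable_mult summable_geometric) simp
    then show ?thesis using V0 M0
      by (simp add: ennreal_suminf_neq_top less_top[symmetric])
  qed
  finally show ?thesis .
qed


definition IR :: "real \<Rightarrow> 'q::finite itself \<Rightarrow> ennreal" where
  "IR \<alpha> (TYPE('q)) = (\<integral>\<^sup>+u. ennreal (indicator (ball (0::real^'q) 1) u * norm u powr (-\<alpha>)) \<partial>lborel)"

lemma norm_powr_meas[measurable]:
  "(\<lambda>x::real^'q::finite. norm x powr (a::real)) \<in> borel_measurable borel"
  by (rule powr_real_measurable) (auto intro: borel_measurable_continuous_onI continuous_intros)

lemma riesz_translate:
  fixes z :: "real^'q::finite"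
  assumes r: "0 < r"
  shows "(\<integral>\<^sup>+w. ennreal (indicator (ball z r) w * norm (w - z) powr (-\<alpha>)) \<partial>lborel)
     = ennreal (r powr (-\<alpha>) * r ^ CARD('q)) * IR \<alpha> TYPE('q)"
proof -
  define g where "g u = ennreal (indicator (ball (0::real^'q) 1) u * norm u powr (-\<alpha>))" for u
  have gm: "g \<in> borel_measurable borel" unfolding g_def
    by (rule measurable_compose[OF _ measurable_ennreal])
      (intro borel_measurable_times borel_measurable_indicator norm_powr_meas; simp add: borel_open)
  have pt: "ennreal (indicator (ball z r) w * norm (w - z) powr (-\<alpha>)) = ennreal (r powr (-\<alpha>)) * g (inverse r *\<^sub>R (w - z))" for w
  proof -
    have nn: "norm (inverse r *\<^sub>R (w - z)) = norm (w - z) / r"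
      using r by (simp only: norm_scaleR) (simp add: divide_inverse_commute)
    have b: "(inverse r *\<^sub>R (w - z) \<in> ball 0 1) = (w \<in> ball z r)"
      by (simp only: mem_ball dist_0_norm nn) (simp add: dist_norm norm_minus_commute divide_less_eq r)
    have n: "norm (inverse r *\<^sub>R (w - z)) powr (-\<alpha>) = r powr \<alpha> * norm (w - z) powr (-\<alpha>)"
    proof -
      have "(norm (w - z) / r) powr (-\<alpha>) = norm (w - z) powr (-\<alpha>) / r powr (-\<alpha>)"
        using r by (intro powr_divide)
      also have "\<dots> = r powr \<alpha> * norm (w - z) powr (-\<alpha>)"
        using r by (simp add: powr_minus[of r] divide_inverse)
      finally show ?thesis unfolding nn .
    qed
    define X where "X = indicator (ball z r) w * (r powr \<alpha> * norm (w - z) powr (-\<alpha>))"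
    have X0: "0 \<le> X" unfolding X_def by simp
    have rX: "r powr (-\<alpha>) * X = indicator (ball z r) w * norm (w - z) powr (-\<alpha>)"
      unfolding X_def using r by (simp add: powr_minus)
    have "ennreal (r powr (-\<alpha>)) * g (inverse r *\<^sub>R (w - z)) = ennreal (r powr (-\<alpha>)) * ennreal X"
      unfolding g_def n X_def indicator_def b by simp
    also have "\<dots> = ennreal (r powr (-\<alpha>) * X)" by (rule ennreal_mult[symmetric]) (simp_all add: X0)
    finally show ?thesis unfolding rX by simp
  qed
  have "(\<integral>\<^sup>+w. ennreal (indicator (ball z r) w * norm (w - z) powr (-\<alpha>)) \<partial>lborel)
     = (\<integral>\<^sup>+w. ennreal (r powr (-\<alpha>)) * g (inverse r *\<^sub>R (w - z)) \<partial>lborel)"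
    by (simp add: pt)
  also have "\<dots> = ennreal (r powr (-\<alpha>)) * (\<integral>\<^sup>+w. g (inverse r *\<^sub>R (w - z)) \<partial>lborel)"
    by (rule nn_integral_cmult) (use gm in measurable)
  also have "\<dots> = ennreal (r powr (-\<alpha>)) * (ennreal (r ^ CARD('q)) * (\<integral>\<^sup>+u. g u \<partial>lborel))"
    by (simp add: scale_nn[OF gm r])
  also have "\<dots> = ennreal (r powr (-\<alpha>) * r ^ CARD('q)) * IR \<alpha> TYPE('q)"
    unfolding IR_def g_def using r by (simp add: ennreal_mult' mult.assoc)
  finally show ?thesis .
qed

lemma bilinear:
  fixes f F :: "real^'q::finite \<Rightarrow> real"
  assumes Fm: "F \<in> borel_measurable borel"
    and fF: "\<And>w. \<bar>f w\<bar> \<le> F w" and Finf: "\<And>w. F w \<le> Ninf"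
    and F1: "(\<integral>\<^sup>+w. ennreal (F w) \<partial>lborel) \<le> ennreal N1"
    and r: "0 < r" and a: "0 < \<alpha>" and N10: "0 \<le> N1"
  shows "(\<integral>\<^sup>+z. (\<integral>\<^sup>+w. ennreal (\<bar>f w * f z\<bar> * (norm (w - z) powr (-\<alpha>) + 1)) \<partial>lborel) \<partial>lborel)
     \<le> ennreal N1 * (ennreal ((r powr (-\<alpha>) + 1) * N1) + ennreal Ninf * (ennreal (r powr (-\<alpha>) * r ^ CARD('q)) * IR \<alpha> TYPE('q)))"
proof -
  define B where "B = ennreal ((r powr (-\<alpha>) + 1) * N1) + ennreal Ninf * (ennreal (r powr (-\<alpha>) * r ^ CARD('q)) * IR \<alpha> TYPE('q))"
  have F0: "0 \<le> F w" for w using fF[of w] by linarith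
  have Ninf0: "0 \<le> Ninf" using F0[of 0] Finf[of 0] by linarith
  have rp: "0 \<le> r powr (-\<alpha>) + 1" by simp
  have inner: "(\<integral>\<^sup>+w. ennreal (\<bar>f w * f z\<bar> * (norm (w - z) powr (-\<alpha>) + 1)) \<partial>lborel) \<le> ennreal (F z) * B" for z
  proof -
    have pw: "ennreal (\<bar>f w * f z\<bar> * (norm (w - z) powr (-\<alpha>) + 1)) \<le>
       ennreal (F z) * (ennreal (r powr (-\<alpha>) + 1) * ennreal (F w) + ennreal Ninf * ennreal (indicator (ball z r) w * norm (w - z) powr (-\<alpha>)))" for w
    proof -
      define P where "P = norm (w - z) powr (-\<alpha>)"
      have P0: "0 \<le> P" unfolding P_def by simp
      have key: "F w * (P + 1) \<le> (r powr (-\<alpha>) + 1) * F w + Ninf * (indicator (ball z r) w * P)"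
      proof (cases "w \<in> ball z r")
        case True
        have "F w * P \<le> Ninf * P" using Finf[of w] P0 by (rule mult_right_mono)
        moreover have "F w \<le> (r powr (-\<alpha>) + 1) * F w" using F0[of w] by (simp add: algebra_simps)
        ultimately show ?thesis using True by (simp add: algebra_simps)
      next
        case False
        then have d: "r \<le> norm (w - z)" by (simp add: dist_norm norm_minus_commute)
        have "P \<le> r powr (-\<alpha>)" unfolding P_def using d r a by (intro powr_mono2') auto
        then have "F w * (P + 1) \<le> F w * (r powr (-\<alpha>) + 1)" using F0[of w] by (intro mult_left_mono) auto
        then show ?thesis using False by (simp add: algebra_simps)
      qed
      have "\<bar>f w * f z\<bar> * (P + 1) \<le> F z * (F w * (P + 1))"
      proof -
        have "\<bar>f w * f z\<bar> \<le> F w * F z" unfolding abs_mult using fF[of w] fF[of z]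
          by (intro mult_mono) auto
        then have "\<bar>f w * f z\<bar> * (P + 1) \<le> (F w * F z) * (P + 1)" using P0 by (intro mult_right_mono) auto
        then show ?thesis by (simp add: algebra_simps)
      qed
      also have "\<dots> \<le> F z * ((r powr (-\<alpha>) + 1) * F w + Ninf * (indicator (ball z r) w * P))"
        using key F0[of z] by (rule mult_left_mono)
      finally have le: "\<bar>f w * f z\<bar> * (P + 1) \<le> F z * ((r powr (-\<alpha>) + 1) * F w + Ninf * (indicator (ball z r) w * P))" .
      have "ennreal (\<bar>f w * f z\<bar> * (P + 1)) \<le> ennreal (F z * ((r powr (-\<alpha>) + 1) * F w + Ninf * (indicator (ball z r) w * P)))"
        by (rule ennreal_leI[OF le])
      also have "\<dots> = ennreal (F z) * (ennreal (r powr (-\<alpha>) + 1) * ennreal (F w) + ennreal Ninf * ennreal (indicator (ball z r) w * P))"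
      proof -
        have i0: "0 \<le> indicator (ball z r) w * P" using P0 by simp
        have a0: "0 \<le> (r powr (-\<alpha>) + 1) * F w" using rp F0[of w] by simp
        have b0: "0 \<le> Ninf * (indicator (ball z r) w * P)" using Ninf0 i0 by simp
        show ?thesis
          by (simp only: ennreal_mult[OF F0[of z] add_nonneg_nonneg[OF a0 b0]] ennreal_plus[OF a0 b0]
              ennreal_mult[OF rp F0[of w]] ennreal_mult[OF Ninf0 i0])
      qed
      finally show ?thesis unfolding P_def .
    qed
    have "(\<integral>\<^sup>+w. ennreal (\<bar>f w * f z\<bar> * (norm (w - z) powr (-\<alpha>) + 1)) \<partial>lborel) \<le>
      (\<integral>\<^sup>+w. ennreal (F z) * (ennreal (r powr (-\<alpha>) + 1) * ennreal (F w) + ennreal Ninf * ennreal (indicator (ball z r) w * norm (w - z) powr (-\<alpha>))) \<partial>lborel)"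
      by (intro nn_integral_mono pw)
    also have "\<dots> = ennreal (F z) * (ennreal (r powr (-\<alpha>) + 1) * (\<integral>\<^sup>+w. ennreal (F w) \<partial>lborel) + ennreal Ninf * (\<integral>\<^sup>+w. ennreal (indicator (ball z r) w * norm (w - z) powr (-\<alpha>)) \<partial>lborel))"
    proof -
      have m1: "(\<lambda>w. ennreal (F w)) \<in> borel_measurable lborel" using Fm by measurable
      have m2: "(\<lambda>w. ennreal (indicator (ball z r) w * norm (w - z) powr (-\<alpha>))) \<in> borel_measurable lborel"
        by (rule measurable_compose[OF _ measurable_ennreal])
          (intro borel_measurable_times borel_measurable_indicator measurable_compose[OF _ norm_powr_meas] borel_measurable_diff measurable_ident_sets measurable_const; simp add: borel_open)
      show ?thesis
        using m1 m2
        by (simp add: nn_integral_cmult nn_integral_add)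
    qed
    also have "\<dots> \<le> ennreal (F z) * B"
    proof -
      have t1eq: "ennreal ((r powr (-\<alpha>) + 1) * N1) = ennreal (r powr (-\<alpha>) + 1) * ennreal N1"
        using rp N10 by (rule ennreal_mult)
      have t1: "ennreal (r powr (-\<alpha>) + 1) * (\<integral>\<^sup>+w. ennreal (F w) \<partial>lborel) \<le> ennreal ((r powr (-\<alpha>) + 1) * N1)"
        unfolding t1eq by (rule mult_left_mono[OF F1]) simp
      show ?thesis unfolding B_def riesz_translate[OF r]
        by (intro mult_left_mono add_mono t1 order_refl) simp
    qed
    finally show ?thesis .
  qed
  have "(\<integral>\<^sup>+z. (\<integral>\<^sup>+w. ennreal (\<bar>f w * f z\<bar> * (norm (w - z) powr (-\<alpha>) + 1)) \<partial>lborel) \<partial>lborel)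
     \<le> (\<integral>\<^sup>+z. ennreal (F z) * B \<partial>lborel)"
    by (intro nn_integral_mono inner)
  also have "\<dots> = (\<integral>\<^sup>+z. ennreal (F z) \<partial>lborel) * B"
    using Fm by (simp add: nn_integral_multc)
  also have "\<dots> \<le> ennreal N1 * B" by (intro mult_right_mono F1) simp
  finally show ?thesis unfolding B_def .
qed


lemma hk_alt:
  fixes y :: "real^'q::finite"
  assumes s: "0 < s"
  shows "heat_kernel s y = (2*pi) powr (-real CARD('q)/2) * exp (-(norm y)\<^sup>2/(2 * s)) / (sqrt s)^CARD('q)"
proof -
  have "(2 * pi * s) powr (-real CARD('q)/2) = (2*pi) powr (-real CARD('q)/2) * s powr (-real CARD('q)/2)"
    using s by (simp add: powr_mult)
  also have "s powr (-real CARD('q)/2) = inverse (s powr (real CARD('q)/2))"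
    by (simp add: powr_minus[symmetric])
  also have "s powr (real CARD('q)/2) = (sqrt s) ^ CARD('q)"
  proof -
    have "s powr (real CARD('q)/2) = (s powr (1/2)) powr real CARD('q)" by (simp add: powr_powr)
    also have "\<dots> = (sqrt s) powr real CARD('q)" using s by (simp add: powr_half_sqrt)
    also have "\<dots> = (sqrt s) ^ CARD('q)" using s by (simp add: powr_realpow)
    finally show ?thesis .
  qed
  finally show ?thesis unfolding heat_kernel_def by (simp add: field_simps)
qed

lemma hkd_sq:
  fixes y :: "real^'q::finite"
  assumes "0 < \<sigma>"
  shows "heat_kernel_deriv (\<sigma>\<^sup>2) l y = - (y$l) * (2*pi) powr (-real CARD('q)/2) * exp (-(norm y)\<^sup>2/(2*\<sigma>\<^sup>2)) / \<sigma>^(CARD('q)+2)"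
  using assms unfolding heat_kernel_deriv_def by (simp add: hk_alt field_simps power_add power2_eq_square)

lemma deriv_H:
  fixes a c Y Q :: real and N :: nat
  assumes "0 < \<sigma>"
  shows "((\<lambda>\<sigma>. - a * c * exp (-Y/(2*\<sigma>\<^sup>2)) / \<sigma>^(N+2)) has_real_derivative
           (- a * c * exp (-Y/(2*\<sigma>\<^sup>2)) * (Y/\<sigma>\<^sup>2 - (real N + 2)) / \<sigma>^(N+3))) (at \<sigma>)"
  using assms
  apply (auto intro!: derivative_eq_intros)
  apply (simp add: field_simps)
  apply (simp add: power_add eval_nat_numeral algebra_simps)
  apply (cases N, auto)
  done


lemma G_poly_bound:
  assumes r: "0 \<le> \<rho>" and M: "1 \<le> M"
  shows "\<rho> * exp (-\<rho>\<^sup>2/4) * (\<rho>\<^sup>2 + M) \<le> M * G \<rho>"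
proof -
  have p: "\<rho> * (\<rho>\<^sup>2 + M) \<le> M * (1+\<rho>)^3"
  proof -
    have "\<rho> * (\<rho>\<^sup>2 + M) = \<rho>^3 + M * \<rho>" by (simp add: power2_eq_square power3_eq_cube algebra_simps)
    also have "\<dots> \<le> M * \<rho>^3 + M * (1 + 3*\<rho> + 3*\<rho>\<^sup>2)"
      using r M by (intro add_mono) (auto intro!: mult_right_mono[of 1 M, simplified] mult_left_mono simp: power2_eq_square)
    also have "\<dots> = M * (1+\<rho>)^3" by (simp add: power2_eq_square power3_eq_cube algebra_simps)
    finally show ?thesis .
  qed
  have e: "exp (-\<rho>\<^sup>2/4) \<le> exp (-\<rho>\<^sup>2/8)" by simp
  have "\<rho> * exp (-\<rho>\<^sup>2/4) * (\<rho>\<^sup>2 + M) = (\<rho> * (\<rho>\<^sup>2 + M)) * exp (-\<rho>\<^sup>2/4)" by simp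
  also have "\<dots> \<le> (M * (1+\<rho>)^3) * exp (-\<rho>\<^sup>2/8)"
    by (rule mult_mono[OF p e]) (use r M in auto)
  also have "\<dots> = M * G \<rho>" unfolding G_def by simp
  finally show ?thesis .
qed

lemma time_diff:
  fixes y :: "real^'q::finite" and l :: 'q
  assumes t: "0 < t" "t \<le> t'" "t' \<le> 2 * t"
  shows "\<bar>heat_kernel_deriv t l y - heat_kernel_deriv t' l y\<bar>
     \<le> (t' - t) / t * ((2*pi) powr (-real CARD('q)/2) * (real CARD('q) + 2)) / (sqrt t)^(CARD('q)+1) * G (norm y / sqrt t)"
proof (cases "t = t'")
  case True
  then show ?thesis by simp
next
  case False
  with t have tt: "t < t'" by simp
  define c where "c = (2*pi) powr (-real CARD('q)/2)"
  have c0: "0 \<le> c" unfolding c_def by simp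
  define N where "N = CARD('q)"
  define T where "T = sqrt t"
  define T' where "T' = sqrt t'"
  define a where "a = y$l"
  define Y where "Y = (norm y)\<^sup>2"
  define H where "H \<sigma> = - a * c * exp (-Y/(2*\<sigma>\<^sup>2)) / \<sigma>^(N+2)" for \<sigma> :: real
  define H' where "H' \<sigma> = - a * c * exp (-Y/(2*\<sigma>\<^sup>2)) * (Y/\<sigma>\<^sup>2 - (real N + 2)) / \<sigma>^(N+3)" for \<sigma> :: real
  have T0: "0 < T" unfolding T_def using t by simp
  have TT: "T < T'" unfolding T_def T'_def using tt by simp
  have Tsq: "T\<^sup>2 = t" unfolding T_def using t by simp
  have T'sq: "T'\<^sup>2 = t'" unfolding T'_def using t by simp
  have hT: "heat_kernel_deriv t l y = H T"
    using hkd_sq[OF T0, of l y] unfolding H_def Tsq a_def c_def Y_def N_def by simp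
  have hT': "heat_kernel_deriv t' l y = H T'"
    using hkd_sq[of T' l y] T0 TT unfolding H_def T'sq a_def c_def Y_def N_def by simp
  have der: "DERIV H \<sigma> :> H' \<sigma>" if "T \<le> \<sigma>" for \<sigma>
  proof -
    have "0 < \<sigma>" using that T0 by simp
    from deriv_H[OF this, of a c Y N] show ?thesis unfolding H_def H'_def .
  qed
  obtain \<xi> where \<xi>: "T < \<xi>" "\<xi> < T'" "H T' - H T = (T' - T) * H' \<xi>"
    using MVT2[OF TT der] by auto
  have \<xi>0: "0 < \<xi>" using \<xi> T0 by simp
  have \<xi>sq1: "t \<le> \<xi>\<^sup>2" using \<xi>(1) T0 Tsq by (metis less_imp_le power_mono)
  have \<xi>sq2: "\<xi>\<^sup>2 \<le> 2 * t" using \<xi>(2) \<xi>0 T'sq t(3) by (metis less_imp_le order.trans power_mono)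
  have Y0: "0 \<le> Y" unfolding Y_def by simp
  have e1: "exp (-Y/(2*\<xi>\<^sup>2)) \<le> exp (-Y/(4*t))"
    using Y0 \<xi>sq2 t(1) \<xi>0 by (simp add: frac_le)
  have e2: "\<bar>Y/\<xi>\<^sup>2 - (real N + 2)\<bar> \<le> Y/t + (real N + 2)"
  proof -
    have pp: "0 < \<xi>\<^sup>2 * t" using \<xi>0 t(1) by simp
    have "Y/\<xi>\<^sup>2 \<le> Y/t" using Y0 \<xi>sq1 pp by (intro divide_left_mono) auto
    moreover have "0 \<le> Y/\<xi>\<^sup>2" using Y0 by simp
    ultimately show ?thesis by linarith
  qed
  have e3: "1/\<xi>^(N+3) \<le> 1/T^(N+3)"
    using \<xi>(1) T0 by (intro divide_left_mono power_mono) auto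
  have e4: "\<bar>a\<bar> \<le> norm y" unfolding a_def by (rule component_le_norm_cart)
  have e5: "T' - T \<le> (t' - t)/T"
  proof -
    have "(T' - T) * (T' + T) = t' - t" using Tsq T'sq by (simp add: power2_eq_square algebra_simps)
    moreover have "T \<le> T' + T" using TT T0 by simp
    moreover have "0 \<le> T' - T" using TT by simp
    ultimately have "(T' - T) * T \<le> t' - t" by (metis mult_left_mono)
    thus ?thesis using T0 by (simp add: field_simps)
  qed
  have "\<bar>heat_kernel_deriv t l y - heat_kernel_deriv t' l y\<bar> = (T' - T) * \<bar>H' \<xi>\<bar>"
    using \<xi>(3) TT unfolding hT hT' by (simp add: abs_minus_commute abs_mult)
  also have "\<bar>H' \<xi>\<bar> = \<bar>a\<bar> * c * exp (-Y/(2*\<xi>\<^sup>2)) * \<bar>Y/\<xi>\<^sup>2 - (real N + 2)\<bar> * (1/\<xi>^(N+3))"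
    unfolding H'_def using c0 \<xi>0 by (simp add: abs_mult abs_divide)
  also have "\<dots> \<le> norm y * c * exp (-Y/(4*t)) * (Y/t + (real N + 2)) * (1/T^(N+3))"
    using e1 e2 e3 e4 c0 \<xi>0 by (intro mult_mono mult_nonneg_nonneg) auto
  finally have step: "\<bar>heat_kernel_deriv t l y - heat_kernel_deriv t' l y\<bar> \<le> (T' - T) * (norm y * c * exp (-Y/(4*t)) * (Y/t + (real N + 2)) * (1/T^(N+3)))"
    using TT by (simp add: mult_left_mono)
  also have "\<dots> \<le> (t' - t)/T * (norm y * c * exp (-Y/(4*t)) * (Y/t + (real N + 2)) * (1/T^(N+3)))"
    using e5 c0 Y0 T0 t(1) by (intro mult_right_mono) (auto intro!: mult_nonneg_nonneg divide_nonneg_nonneg)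
  also have "\<dots> = (t' - t) / t * c / T^(N+1) * ((norm y / T) * exp (-(norm y / T)\<^sup>2/4) * ((norm y / T)\<^sup>2 + (real N + 2)))"
  proof -
    define \<rho> where "\<rho> = norm y / T"
    have ny: "norm y = \<rho> * T" unfolding \<rho>_def using T0 by simp
    have a1: "-Y/(4*t) = -\<rho>\<^sup>2/4" unfolding Y_def Tsq[symmetric] ny using T0 by (simp add: power_mult_distrib)
    have a2: "Y/t = \<rho>\<^sup>2" unfolding Y_def Tsq[symmetric] ny using T0 by (simp add: power_mult_distrib)
    have "(t' - t)/T * (norm y * c * exp (-Y/(4*t)) * (Y/t + (real N + 2)) * (1/T^(N+3)))
       = (t' - t)/T * (\<rho> * T * c * exp (-\<rho>\<^sup>2/4) * (\<rho>\<^sup>2 + (real N + 2)) * (1/T^(N+3)))"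
      unfolding a1 a2 ny by simp
    also have "\<dots> = (t' - t) / t * c / T^(N+1) * (\<rho> * exp (-\<rho>\<^sup>2/4) * (\<rho>\<^sup>2 + (real N + 2)))"
      unfolding Tsq[symmetric] using T0 by (simp add: field_simps power_add eval_nat_numeral)
    finally show ?thesis unfolding \<rho>_def .
  qed
  also have "\<dots> \<le> (t' - t) / t * c / T^(N+1) * ((real N + 2) * G (norm y / T))"
    using tt t T0 c0 by (intro mult_left_mono G_poly_bound) auto
  finally show ?thesis unfolding c_def N_def T_def by (simp add: mult.assoc)
qed


lemma norm_comb_sq:
  fixes y d :: "real^'q::finite"
  shows "(norm (y + \<theta> *\<^sub>R d))\<^sup>2 = (norm y)\<^sup>2 + 2*\<theta>*(y \<bullet> d) + \<theta>\<^sup>2 * (norm d)\<^sup>2"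
  unfolding power2_norm_eq_inner by (simp add: inner_add_left inner_add_right inner_commute algebra_simps power2_eq_square)

lemma deriv_k0:
  assumes "(Q has_real_derivative Q') (at \<theta>)"
  shows "((\<lambda>\<theta>. - K * (a + \<theta>*b) * exp (Q \<theta>)) has_real_derivative (- K * exp (Q \<theta>) * (b + (a + \<theta>*b) * Q'))) (at \<theta>)"
  using assms by (auto intro!: derivative_eq_intros simp: algebra_simps)

lemma deriv_Q:
  fixes Y p D2 s :: real
  assumes s: "s \<noteq> 0"
  shows "((\<lambda>\<theta>. -(Y + 2*\<theta>*p + \<theta>\<^sup>2*D2)/(2 * s)) has_real_derivative (- (p + \<theta>*D2) / s)) (at \<theta>)"
  using s by (auto intro!: derivative_eq_intros simp: field_simps)

lemma deriv_k:
  fixes K a b Y p D2 s :: real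
  assumes s: "s \<noteq> 0"
  shows "((\<lambda>\<theta>. - K * (a + \<theta>*b) * exp (-(Y + 2*\<theta>*p + \<theta>\<^sup>2*D2)/(2 * s))) has_real_derivative
     (- K * exp (-(Y + 2*\<theta>*p + \<theta>\<^sup>2*D2)/(2 * s)) * (b - (a + \<theta>*b) * (p + \<theta>*D2) / s))) (at \<theta>)"
proof -
  have eq: "- K * exp (-(Y + 2*\<theta>*p + \<theta>\<^sup>2*D2)/(2 * s)) * (b - (a + \<theta>*b) * (p + \<theta>*D2) / s)
     = - K * exp (-(Y + 2*\<theta>*p + \<theta>\<^sup>2*D2)/(2 * s)) * (b + (a + \<theta>*b) * (- (p + \<theta>*D2) / s))"
    by (simp only: minus_divide_left[symmetric] mult_minus_right times_divide_eq_right diff_conv_add_uminus)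
  show ?thesis unfolding eq by (rule deriv_k0[OF deriv_Q[OF s]])
qed

lemma space_diff:
  fixes y d :: "real^'q::finite" and l :: 'q
  assumes t: "0 < t" "t \<le> s" "s \<le> 2 * t" and dn: "norm d \<le> sqrt t"
  shows "\<bar>heat_kernel_deriv s l y - heat_kernel_deriv s l (y + d)\<bar>
     \<le> norm d / sqrt t * (2 * exp (1/4) * (2*pi) powr (-real CARD('q)/2)) / (sqrt t)^(CARD('q)+1) * G (norm y / sqrt t)"
proof -
  define c where "c = (2*pi) powr (-real CARD('q)/2)"
  have c0: "0 \<le> c" unfolding c_def by simp
  define N where "N = CARD('q)"
  define T where "T = sqrt t"
  define S where "S = sqrt s"
  define K where "K = c / S^(N+2)"
  define a where "a = y$l"
  define b where "b = d$l"
  define Y where "Y = (norm y)\<^sup>2"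
  define p where "p = y \<bullet> d"
  define D2 where "D2 = (norm d)\<^sup>2"
  define k where "k \<theta> = - K * (a + \<theta>*b) * exp (-(Y + 2*\<theta>*p + \<theta>\<^sup>2*D2)/(2 * s))" for \<theta>
  define k' where "k' \<theta> = - K * exp (-(Y + 2*\<theta>*p + \<theta>\<^sup>2*D2)/(2 * s)) * (b - (a + \<theta>*b) * (p + \<theta>*D2) / s)" for \<theta>
  have T0: "0 < T" unfolding T_def using t by simp
  have S0: "0 < S" unfolding S_def using t by simp
  have Tsq: "T\<^sup>2 = t" unfolding T_def using t by simp
  have Ssq: "S\<^sup>2 = s" unfolding S_def using t by simp
  have TS: "T \<le> S" unfolding T_def S_def using t by simp
  have s0: "s \<noteq> 0" using t by simp
  have K0: "0 \<le> K" unfolding K_def using c0 S0 by simp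
  have hk: "heat_kernel_deriv s l (y + \<theta> *\<^sub>R d) = k \<theta>" for \<theta>
  proof -
    have "heat_kernel_deriv (S\<^sup>2) l (y + \<theta> *\<^sub>R d) = - ((y + \<theta> *\<^sub>R d)$l) * c * exp (-(norm (y + \<theta> *\<^sub>R d))\<^sup>2/(2*S\<^sup>2)) / S^(N+2)"
      using hkd_sq[OF S0, of l "y + \<theta> *\<^sub>R d"] unfolding c_def N_def .
    also have "\<dots> = k \<theta>"
    proof -
      have e1: "(y + \<theta> *\<^sub>R d)$l = a + \<theta>*b" unfolding a_def b_def by simp
      have e2: "-(norm (y + \<theta> *\<^sub>R d))\<^sup>2/(2*S\<^sup>2) = -(Y + 2*\<theta>*p + \<theta>\<^sup>2*D2)/(2 * s)"
        unfolding Ssq norm_comb_sq Y_def p_def D2_def ..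
      have gen: "- x * c * E / P = - (c / P) * x * E" for x E P :: real by (simp add: field_simps)
      show ?thesis unfolding k_def K_def e1 e2 by (rule gen)
    qed
    finally show ?thesis unfolding Ssq .
  qed
  have k0: "heat_kernel_deriv s l y = k 0" using hk[of 0] by simp
  have k1: "heat_kernel_deriv s l (y + d) = k 1" using hk[of 1] by simp
  have der: "DERIV k \<theta> :> k' \<theta>" if "0 \<le> \<theta>" for \<theta>
    unfolding k_def k'_def by (rule deriv_k[OF s0])
  obtain \<xi> where \<xi>: "0 < \<xi>" "\<xi> < 1" "k 1 - k 0 = (1 - 0) * k' \<xi>"
    using MVT2[of 0 1 k k'] der by auto
  define z where "z = y + \<xi> *\<^sub>R d"
  have zl: "a + \<xi>*b = z$l" unfolding z_def a_def b_def by simp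
  have zd: "p + \<xi>*D2 = z \<bullet> d" unfolding z_def p_def D2_def
    by (simp add: inner_add_left power2_norm_eq_inner)
  have zn: "Y + 2*\<xi>*p + \<xi>\<^sup>2*D2 = (norm z)\<^sup>2" unfolding z_def norm_comb_sq Y_def p_def D2_def by simp
  have kx: "k' \<xi> = - K * exp (-(norm z)\<^sup>2/(2 * s)) * (d$l - z$l * (z \<bullet> d) / s)"
    unfolding k'_def zn zl zd by (simp add: b_def)
  have B1: "\<bar>d$l - z$l * (z \<bullet> d) / s\<bar> \<le> norm d * (1 + (norm z)\<^sup>2/t)"
  proof -
    have "\<bar>d$l\<bar> \<le> norm d" by (rule component_le_norm_cart)
    moreover have "\<bar>z$l * (z \<bullet> d) / s\<bar> \<le> norm d * ((norm z)\<^sup>2/t)"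
    proof -
      have "\<bar>z$l * (z \<bullet> d) / s\<bar> = \<bar>z$l\<bar> * \<bar>z \<bullet> d\<bar> / s" using t by (simp add: abs_mult)
      also have "\<dots> \<le> norm z * (norm z * norm d) / s"
        using t by (intro divide_right_mono mult_mono component_le_norm_cart Cauchy_Schwarz_ineq2) auto
      also have "\<dots> \<le> norm z * (norm z * norm d) / t"
        using t by (intro divide_left_mono mult_nonneg_nonneg) auto
      also have "\<dots> = norm d * ((norm z)\<^sup>2/t)" by (simp add: power2_eq_square)
      finally show ?thesis .
    qed
    ultimately have "\<bar>d$l - z$l * (z \<bullet> d) / s\<bar> \<le> norm d + norm d * ((norm z)\<^sup>2/t)"
      using abs_triangle_ineq4[of "d$l" "z$l * (z \<bullet> d) / s"] by linarith
    thus ?thesis by (simp add: distrib_left)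
  qed
  have B2: "K \<le> c / T^(N+2)" unfolding K_def using c0 T0 TS by (intro divide_left_mono power_mono) auto
  have B3: "exp (-(norm z)\<^sup>2/(2 * s)) \<le> exp (-(norm z)\<^sup>2/(4*t))"
    using t by (simp add: frac_le)
  have "\<bar>heat_kernel_deriv s l y - heat_kernel_deriv s l (y + d)\<bar> = \<bar>k' \<xi>\<bar>"
    unfolding k0 k1 using \<xi>(3) by simp
  also have "\<dots> = K * exp (-(norm z)\<^sup>2/(2 * s)) * \<bar>d$l - z$l * (z \<bullet> d) / s\<bar>"
    unfolding kx using K0 by (simp add: abs_mult)
  also have "\<dots> \<le> c / T^(N+2) * exp (-(norm z)\<^sup>2/(4*t)) * (norm d * (1 + (norm z)\<^sup>2/t))"
    using B1 B2 B3 K0 c0 T0 by (intro mult_mono) auto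
  also have "\<dots> \<le> c / T^(N+2) * (norm d * (2 * exp (1/4) * G (norm y / T)))"
  proof -
    define \<rho> where "\<rho> = norm y / T"
    have \<rho>0: "0 \<le> \<rho>" unfolding \<rho>_def using T0 by simp
    have dT: "norm d \<le> T" using dn unfolding T_def .
    have nz: "norm y \<le> norm z + norm d"
    proof -
      have "y = z - \<xi> *\<^sub>R d" unfolding z_def by simp
      hence "norm y \<le> norm z + norm (\<xi> *\<^sub>R d)" by (metis norm_triangle_ineq4)
      also have "norm (\<xi> *\<^sub>R d) \<le> norm d" using \<xi> by (simp add: mult_left_le_one_le)
      finally show ?thesis by simp
    qed
    have nz2: "norm z \<le> norm y + norm d"
    proof -
      have "norm z \<le> norm y + norm (\<xi> *\<^sub>R d)" unfolding z_def by (rule norm_triangle_ineq)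
      also have "norm (\<xi> *\<^sub>R d) \<le> norm d" using \<xi> by (simp add: mult_left_le_one_le)
      finally show ?thesis by simp
    qed
    have B5: "exp (-(norm z)\<^sup>2/(4*t)) \<le> exp (1/4) * exp (-\<rho>\<^sup>2/8)"
    proof -
      have "(norm y)\<^sup>2 \<le> (norm z + norm d)\<^sup>2" using nz by (intro power_mono) auto
      also have "\<dots> \<le> 2*(norm z)\<^sup>2 + 2*(norm d)\<^sup>2"
        using sum_squares_bound[of "norm z" "norm d"] by (simp add: power2_sum)
      finally have "(norm y)\<^sup>2 \<le> 2*(norm z)\<^sup>2 + 2*(norm d)\<^sup>2" .
      moreover have "(norm d)\<^sup>2 \<le> t" using dT T0 Tsq by (metis norm_ge_zero power_mono)
      ultimately have "(norm y)\<^sup>2 \<le> 2*(norm z)\<^sup>2 + 2*t" by linarith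
      hence "-(norm z)\<^sup>2/(4*t) \<le> 1/4 + -\<rho>\<^sup>2/8"
      proof -
        assume A: "(norm y)\<^sup>2 \<le> 2*(norm z)\<^sup>2 + 2*t"
        have r2: "\<rho>\<^sup>2 = (norm y)\<^sup>2/t" unfolding \<rho>_def Tsq[symmetric] by (simp add: power_divide)
        have eq: "(1/4 + -((norm y)\<^sup>2/t)/8) - (-(norm z)\<^sup>2/(4*t)) = (2*t - (norm y)\<^sup>2 + 2*(norm z)\<^sup>2)/(8*t)"
          using t by (simp add: field_simps)
        have "0 \<le> (2*t - (norm y)\<^sup>2 + 2*(norm z)\<^sup>2)/(8*t)" using A t by (intro divide_nonneg_pos) auto
        thus ?thesis unfolding r2 using eq by linarith
      qed
      hence "exp (-(norm z)\<^sup>2/(4*t)) \<le> exp (1/4 + -\<rho>\<^sup>2/8)" by (simp only: exp_le_cancel_iff)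
      thus ?thesis by (simp only: exp_add)
    qed
    have B6: "1 + (norm z)\<^sup>2/t \<le> 2 * (1+\<rho>)^3"
    proof -
      have Tr: "T * (\<rho> + 1) = norm y + T" unfolding \<rho>_def using T0 by (simp add: distrib_left)
      have "norm z \<le> T * (\<rho> + 1)" unfolding Tr using nz2 dT by linarith
      hence "(norm z)\<^sup>2 \<le> (T * (\<rho> + 1))\<^sup>2" by (intro power_mono) auto
      also have "(T * (\<rho> + 1))\<^sup>2 = (\<rho> + 1)\<^sup>2 * t" by (simp add: power_mult_distrib Tsq)
      finally have "(norm z)\<^sup>2/t \<le> (\<rho> + 1)\<^sup>2" by (subst pos_divide_le_eq[OF t(1)])
      moreover have "1 + (\<rho>+1)\<^sup>2 \<le> 2 * (1+\<rho>)^3"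
      proof -
        define u where "u = 1 + \<rho>"
        have u1: "1 \<le> u" unfolding u_def using \<rho>0 by simp
        have "2 * u^3 - (1 + u\<^sup>2) = (u - 1) * (2*u\<^sup>2 + u + 1)"
          by (simp add: algebra_simps power2_eq_square power3_eq_cube)
        moreover have "0 \<le> (u - 1) * (2*u\<^sup>2 + u + 1)" using u1 by (intro mult_nonneg_nonneg) auto
        ultimately have "1 + u\<^sup>2 \<le> 2 * u^3" by linarith
        thus ?thesis unfolding u_def by (simp add: add.commute)
      qed
      ultimately show ?thesis by linarith
    qed
    have "exp (-(norm z)\<^sup>2/(4*t)) * (1 + (norm z)\<^sup>2/t) \<le> (exp (1/4) * exp (-\<rho>\<^sup>2/8)) * (2 * (1+\<rho>)^3)"
      using B5 B6 t by (intro mult_mono) auto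
    also have "\<dots> = 2 * exp (1/4) * G \<rho>" unfolding G_def by simp
    finally have "exp (-(norm z)\<^sup>2/(4*t)) * (1 + (norm z)\<^sup>2/t) \<le> 2 * exp (1/4) * G \<rho>" .
    hence "norm d * (exp (-(norm z)\<^sup>2/(4*t)) * (1 + (norm z)\<^sup>2/t)) \<le> norm d * (2 * exp (1/4) * G \<rho>)"
      by (intro mult_left_mono) auto
    hence "c / T^(N+2) * (norm d * (exp (-(norm z)\<^sup>2/(4*t)) * (1 + (norm z)\<^sup>2/t))) \<le> c / T^(N+2) * (norm d * (2 * exp (1/4) * G \<rho>))"
      by (rule mult_left_mono) (use c0 T0 in simp)
    thus ?thesis unfolding \<rho>_def by (simp add: mult_ac)
  qed
  also have "\<dots> = norm d / T * (2 * exp (1/4) * c) / T^(N+1) * G (norm y / T)"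
  proof -
    have gen: "cc / T^(N+2) * (n * (e * g)) = n / T * (e * cc) / T^(N+1) * g" for cc n e g :: real
      using T0 by (simp add: field_simps power_add)
    show ?thesis by (rule gen)
  qed
  finally show ?thesis unfolding c_def N_def T_def .
qed


lemma hkd_abs:
  fixes y :: "real^'q::finite"
  assumes s: "0 < s"
  shows "\<bar>heat_kernel_deriv s l y\<bar> \<le> (2*pi) powr (-real CARD('q)/2) / (sqrt s)^(CARD('q)+1) * G (norm y / sqrt s)"
proof -
  define S where "S = sqrt s"
  define c where "c = (2*pi) powr (-real CARD('q)/2)"
  define N where "N = CARD('q)"
  define \<rho> where "\<rho> = norm y / S"
  have S0: "0 < S" unfolding S_def using s by simp
  have Ssq: "S\<^sup>2 = s" unfolding S_def using s by simp
  have c0: "0 \<le> c" unfolding c_def by simp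
  have \<rho>0: "0 \<le> \<rho>" unfolding \<rho>_def using S0 by simp
  have ny: "norm y = \<rho> * S" unfolding \<rho>_def using S0 by simp
  have "heat_kernel_deriv s l y = - (y$l) * c * exp (-(norm y)\<^sup>2/(2*S\<^sup>2)) / S^(N+2)"
    using hkd_sq[OF S0, of l y] unfolding Ssq c_def N_def .
  hence "\<bar>heat_kernel_deriv s l y\<bar> = \<bar>y$l\<bar> * c * exp (-(norm y)\<^sup>2/(2*S\<^sup>2)) / S^(N+2)"
    using c0 S0 by (simp add: abs_mult)
  also have "\<dots> \<le> norm y * c * exp (-(norm y)\<^sup>2/(2*S\<^sup>2)) / S^(N+2)"
    using c0 S0 by (intro divide_right_mono mult_right_mono component_le_norm_cart) auto
  also have "\<dots> = c / S^(N+1) * (\<rho> * exp (-\<rho>\<^sup>2/2))"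
  proof -
    have e: "(norm y)\<^sup>2/(2*S\<^sup>2) = \<rho>\<^sup>2/2" unfolding ny using S0 by (simp add: power_mult_distrib)
    have gen: "\<rho> * S * cc * E / S^(N+2) = cc / S^(N+1) * (\<rho> * E)" for cc E :: real
      using S0 by (simp add: field_simps power_add)
    show ?thesis unfolding minus_divide_left[symmetric] e unfolding ny by (rule gen)
  qed
  also have "\<dots> \<le> c / S^(N+1) * G \<rho>"
  proof -
    have "\<rho> \<le> (1+\<rho>)^3"
    proof -
      have "\<rho> \<le> 1 + \<rho>" by simp
      also have "\<dots> \<le> (1+\<rho>)^3" using \<rho>0 by (intro self_le_power) auto
      finally show ?thesis .
    qed
    moreover have "exp (-\<rho>\<^sup>2/2) \<le> exp (-\<rho>\<^sup>2/8)" by simp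
    ultimately have "\<rho> * exp (-\<rho>\<^sup>2/2) \<le> G \<rho>" unfolding G_def using \<rho>0 by (intro mult_mono) auto
    thus ?thesis using c0 S0 by (intro mult_left_mono) auto
  qed
  finally show ?thesis unfolding c_def N_def S_def \<rho>_def .
qed

lemma G_cont: "continuous_on UNIV G"
  unfolding G_def by (intro continuous_intros) auto

lemma G_meas[measurable]: "(\<lambda>w::real^'q::finite. G (norm (w - x) / c)) \<in> borel_measurable borel"
  by (rule measurable_compose[OF _ borel_measurable_continuous_onI[OF G_cont]]) measurable

lemma G_meas0: "(\<lambda>u::real^'q::finite. ennreal (G (norm u))) \<in> borel_measurable borel"
  by (rule measurable_compose[OF _ measurable_ennreal])
     (intro borel_measurable_continuous_onI continuous_on_compose2[OF G_cont] continuous_intros, auto)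

lemma intG:
  fixes x :: "real^'q::finite"
  assumes s: "0 < s"
  shows "(\<integral>\<^sup>+w. ennreal (G (norm (w - x) / sqrt s)) \<partial>lborel) = ennreal ((sqrt s)^CARD('q)) * (\<integral>\<^sup>+u. ennreal (G (norm (u::real^'q))) \<partial>lborel)"
proof -
  have ss: "0 < sqrt s" using s by simp
  have "(\<integral>\<^sup>+w. ennreal (G (norm (w - x) / sqrt s)) \<partial>lborel) = (\<integral>\<^sup>+w. ennreal (G (norm (inverse (sqrt s) *\<^sub>R (w - x)))) \<partial>lborel)"
    using ss by (intro nn_integral_cong) (simp add: divide_inverse_commute)
  also have "\<dots> = ennreal ((sqrt s)^CARD('q)) * (\<integral>\<^sup>+u. ennreal (G (norm (u::real^'q))) \<partial>lborel)"
    using scale_nn[OF G_meas0 ss, of x] by simp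
  finally show ?thesis .
qed

lemma IR_fin: "0 < \<alpha> \<Longrightarrow> \<alpha> < real CARD('q::finite) \<Longrightarrow> IR \<alpha> TYPE('q) = ennreal (enn2real (IR \<alpha> TYPE('q)))"
  unfolding IR_def using riesz_finite[of \<alpha>, where 'q='q] by (simp add: ennreal_enn2real less_top)

lemma assemble:
  fixes f F :: "real^'q::finite \<Rightarrow> real"
  assumes Fm: "F \<in> borel_measurable borel"
    and fF: "\<And>w. \<bar>f w\<bar> \<le> F w"
    and Finf: "\<And>w. F w \<le> Binf * \<sigma> / (sqrt t)^(CARD('q)+1)"
    and F1: "(\<integral>\<^sup>+w. ennreal (F w) \<partial>lborel) \<le> ennreal (B1 * \<sigma> / sqrt t)"
    and t: "0 < t" "t \<le> K" and a: "0 < \<alpha>" "\<alpha> < real CARD('q)"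
    and \<sigma>0: "0 \<le> \<sigma>" and B10: "0 \<le> B1" and Binf0: "0 \<le> Binf"
  shows "(\<integral>\<^sup>+z. (\<integral>\<^sup>+w. ennreal (\<bar>f w * f z\<bar> * (norm (w - z) powr (-\<alpha>) + 1)) \<partial>lborel) \<partial>lborel)
     \<le> ennreal (((1 + K powr (\<alpha>/2)) * B1\<^sup>2 + B1 * Binf * enn2real (IR \<alpha> TYPE('q))) * t powr (-1 - \<alpha>/2) * \<sigma>\<^sup>2)"
proof -
  define u where "u = sqrt t"
  have u0: "0 < u" unfolding u_def using t by simp
  have usq: "u\<^sup>2 = t" unfolding u_def using t by simp
  define N1 where "N1 = B1 * \<sigma> / u"
  define Ninf where "Ninf = Binf * \<sigma> / u^(CARD('q)+1)"
  define R where "R = enn2real (IR \<alpha> TYPE('q))"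
  have R0: "0 \<le> R" unfolding R_def by simp
  have N10: "0 \<le> N1" unfolding N1_def using B10 \<sigma>0 u0 by simp
  have Ninf0: "0 \<le> Ninf" unfolding Ninf_def using Binf0 \<sigma>0 u0 by simp
  define P where "P = u powr (-\<alpha>)"
  have P0: "0 < P" unfolding P_def using u0 by simp
  define X where "X = (P + 1) * N1"
  define Y where "Y = P * u ^ CARD('q)"
  have X0: "0 \<le> X" unfolding X_def using P0 N10 by simp
  have Y0: "0 \<le> Y" unfolding Y_def using P0 u0 by simp
  have "(\<integral>\<^sup>+z. (\<integral>\<^sup>+w. ennreal (\<bar>f w * f z\<bar> * (norm (w - z) powr (-\<alpha>) + 1)) \<partial>lborel) \<partial>lborel)
     \<le> ennreal N1 * (ennreal ((u powr (-\<alpha>) + 1) * N1) + ennreal Ninf * (ennreal (u powr (-\<alpha>) * u ^ CARD('q)) * IR \<alpha> TYPE('q)))"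
    by (rule bilinear[OF Fm fF]) (use Finf F1 u0 a N10 in \<open>simp_all add: Ninf_def N1_def u_def\<close>)
  also have "\<dots> = ennreal (N1 * (X + Ninf * (Y * R)))"
  proof -
    have "IR \<alpha> TYPE('q) = ennreal R" unfolding R_def by (rule IR_fin[OF a])
    moreover have "ennreal N1 * (ennreal X + ennreal Ninf * (ennreal Y * ennreal R)) = ennreal (N1 * (X + Ninf * (Y * R)))"
    proof -
      have YR: "0 \<le> Y * R" using Y0 R0 by simp
      have NYR: "0 \<le> Ninf * (Y * R)" using Ninf0 YR by simp
      show ?thesis
        by (simp only: ennreal_mult[OF N10 add_nonneg_nonneg[OF X0 NYR]] ennreal_plus[OF X0 NYR]
            ennreal_mult[OF Ninf0 YR] ennreal_mult[OF Y0 R0])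
    qed
    ultimately show ?thesis unfolding X_def Y_def P_def by simp
  qed
  also have "N1 * (X + Ninf * (Y * R)) \<le> ((1 + K powr (\<alpha>/2)) * B1\<^sup>2 + B1 * Binf * R) * t powr (-1 - \<alpha>/2) * \<sigma>\<^sup>2"
  proof -
    have tp: "t powr (-1 - \<alpha>/2) = P / u\<^sup>2"
    proof -
      have tu: "t = u powr 2" using u0 usq by simp
      have e: "2 * (-1 - \<alpha>/2) = -2 - \<alpha>" by simp
      have "t powr (-1 - \<alpha>/2) = (u powr 2) powr (-1 - \<alpha>/2)" by (simp only: tu)
      also have "\<dots> = u powr (-2 - \<alpha>)" unfolding powr_powr e ..
      also have "\<dots> = u powr (-\<alpha>) * u powr (-2)" 
      proof -
        have e: "-2 - \<alpha> = -\<alpha> + (-2::real)" by simp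
        show ?thesis unfolding e by (rule powr_add)
      qed
      also have "u powr (-2) = 1 / u\<^sup>2"
      proof -
        have "u powr (-2) = inverse (u powr 2)" by (rule powr_minus)
        also have "u powr 2 = u\<^sup>2" using u0 by simp
        finally show ?thesis by (simp add: divide_inverse)
      qed
      finally show ?thesis unfolding P_def by simp
    qed
    have KP: "1 \<le> K powr (\<alpha>/2) * P"
    proof -
      have "t powr (\<alpha>/2) \<le> K powr (\<alpha>/2)" using t a by (intro powr_mono2) auto
      moreover have "t powr (\<alpha>/2) = u powr \<alpha>"
      proof -
        have tu: "t = u powr 2" using u0 usq by simp
        have e: "2 * (\<alpha>/2) = \<alpha>" by simp
        show ?thesis unfolding tu powr_powr e ..
      qed
      moreover have "u powr \<alpha> * P = 1" unfolding P_def using u0 by (simp add: powr_minus)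
      ultimately have A: "u powr \<alpha> \<le> K powr (\<alpha>/2)" and C: "u powr \<alpha> * P = 1" by auto
      have "u powr \<alpha> * P \<le> K powr (\<alpha>/2) * P" by (rule mult_right_mono[OF A]) (use P0 in simp)
      thus ?thesis using C by linarith
    qed
    have e1: "N1 * X = B1\<^sup>2 * \<sigma>\<^sup>2 * (P + 1) / u\<^sup>2"
    proof -
      have g: "b * s / u * ((p + 1) * (b * s / u)) = b\<^sup>2 * s\<^sup>2 * (p + 1) / u\<^sup>2" for b s p :: real
        by (simp add: power2_eq_square divide_inverse algebra_simps)
      show ?thesis unfolding N1_def X_def by (rule g)
    qed
    have e2: "N1 * (Ninf * (Y * R)) = B1 * Binf * R * \<sigma>\<^sup>2 * P / u\<^sup>2"
    proof -
      have g: "b1 * s / u * (bi * s / u^(n+1) * (p * u^n * r)) = b1 * bi * r * s\<^sup>2 * p / u\<^sup>2" for b1 s bi p r :: real and n :: nat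
        using u0 by (simp add: field_simps power2_eq_square power_add)
      show ?thesis unfolding N1_def Ninf_def Y_def by (rule g)
    qed
    have "N1 * (X + Ninf * (Y * R)) = B1\<^sup>2 * \<sigma>\<^sup>2 * (P + 1) / u\<^sup>2 + B1 * Binf * R * \<sigma>\<^sup>2 * P / u\<^sup>2"
      by (simp add: distrib_left e1 e2)
    also have "\<dots> \<le> B1\<^sup>2 * \<sigma>\<^sup>2 * ((1 + K powr (\<alpha>/2)) * P) / u\<^sup>2 + B1 * Binf * R * \<sigma>\<^sup>2 * P / u\<^sup>2"
    proof -
      have "P + 1 \<le> (1 + K powr (\<alpha>/2)) * P" using KP by (simp add: algebra_simps)
      hence "B1\<^sup>2 * \<sigma>\<^sup>2 * (P + 1) \<le> B1\<^sup>2 * \<sigma>\<^sup>2 * ((1 + K powr (\<alpha>/2)) * P)"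
        by (intro mult_left_mono) auto
      hence "B1\<^sup>2 * \<sigma>\<^sup>2 * (P + 1) / u\<^sup>2 \<le> B1\<^sup>2 * \<sigma>\<^sup>2 * ((1 + K powr (\<alpha>/2)) * P) / u\<^sup>2"
        by (rule divide_right_mono) simp
      thus ?thesis by (rule add_right_mono)
    qed
    also have "\<dots> = ((1 + K powr (\<alpha>/2)) * B1\<^sup>2 + B1 * Binf * R) * (P / u\<^sup>2) * \<sigma>\<^sup>2"
    proof -
      have g: "a * s * ((1 + k) * p) / v + b * s * p / v = ((1 + k) * a + b) * (p / v) * s" for a s k p v b :: real
        by (simp add: divide_inverse algebra_simps)
      show ?thesis by (rule g)
    qed
    finally show ?thesis unfolding tp .
  qed
  hence "ennreal (N1 * (X + Ninf * (Y * R))) \<le> ennreal (((1 + K powr (\<alpha>/2)) * B1\<^sup>2 + B1 * Binf * R) * t powr (-1 - \<alpha>/2) * \<sigma>\<^sup>2)"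
    by (rule ennreal_leI)
  finally show ?thesis unfolding R_def .
qed


lemma intG2:
  fixes x :: "real^'q::finite"
  assumes s: "0 < s" and A: "0 \<le> A"
  shows "(\<integral>\<^sup>+w. ennreal (A * G (norm (w - x) / sqrt s)) \<partial>lborel)
     = ennreal (A * (sqrt s)^CARD('q) * enn2real (\<integral>\<^sup>+u. ennreal (G (norm (u::real^'q))) \<partial>lborel))"
proof -
  have fin: "(\<integral>\<^sup>+u. ennreal (G (norm (u::real^'q))) \<partial>lborel) = ennreal (enn2real (\<integral>\<^sup>+u. ennreal (G (norm (u::real^'q))) \<partial>lborel))"
    using gauss_finite[where 'q='q] by (simp add: ennreal_enn2real less_top)
  have "(\<integral>\<^sup>+w. ennreal (A * G (norm (w - x) / sqrt s)) \<partial>lborel) = (\<integral>\<^sup>+w. ennreal A * ennreal (G (norm (w - x) / sqrt s)) \<partial>lborel)"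
    using A s by (intro nn_integral_cong) (simp add: ennreal_mult G_nonneg)
  also have "\<dots> = ennreal A * (\<integral>\<^sup>+w. ennreal (G (norm (w - x) / sqrt s)) \<partial>lborel)"
    by (rule nn_integral_cmult) measurable
  also have "\<dots> = ennreal A * (ennreal ((sqrt s)^CARD('q)) * ennreal (enn2real (\<integral>\<^sup>+u. ennreal (G (norm (u::real^'q))) \<partial>lborel)))"
    unfolding intG[OF s] fin[symmetric] ..
  also have "\<dots> = ennreal (A * (sqrt s)^CARD('q) * enn2real (\<integral>\<^sup>+u. ennreal (G (norm (u::real^'q))) \<partial>lborel))"
    using A s by (simp add: ennreal_mult mult.assoc)
  finally show ?thesis .
qed

definition IGc :: "'q::finite itself \<Rightarrow> real" where
  "IGc (_::'q itself) = enn2real (\<integral>\<^sup>+u. ennreal (G (norm (u::real^'q))) \<partial>lborel)"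
definition cc :: "'q::finite itself \<Rightarrow> real" where
  "cc (_::'q itself) = (2*pi) powr (-real CARD('q)/2)"
definition Gm :: real where "Gm = 16^3 * fact 3"
definition Cst :: "real \<Rightarrow> real \<Rightarrow> real \<Rightarrow> real \<Rightarrow> 'q::finite itself \<Rightarrow> real" where
  "Cst \<alpha> K B1 Binf (_::'q itself) = (1 + K powr (\<alpha>/2)) * B1\<^sup>2 + B1 * Binf * enn2real (IR \<alpha> TYPE('q))"

lemma IGc_nonneg: "0 \<le> IGc TYPE('q::finite)" unfolding IGc_def by simp
lemma cc_nonneg: "0 \<le> cc TYPE('q::finite)" unfolding cc_def by simp
lemma Gm_nonneg: "0 \<le> Gm" unfolding Gm_def by simp
lemma Cst_nonneg: "0 \<le> B1 \<Longrightarrow> 0 \<le> Binf \<Longrightarrow> 0 \<le> Cst \<alpha> K B1 Binf TYPE('q::finite)"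
  unfolding Cst_def by (intro add_nonneg_nonneg mult_nonneg_nonneg) auto

lemma intG3:
  fixes x :: "real^'q::finite"
  assumes s: "0 < s" and A: "0 \<le> A"
  shows "(\<integral>\<^sup>+w. ennreal (A / (sqrt s)^(CARD('q)+1) * G (norm (w - x) / sqrt s)) \<partial>lborel)
     = ennreal (A * IGc TYPE('q) / sqrt s)"
proof -
  have "(\<integral>\<^sup>+w. ennreal (A / (sqrt s)^(CARD('q)+1) * G (norm (w - x) / sqrt s)) \<partial>lborel)
     = ennreal (A / (sqrt s)^(CARD('q)+1) * (sqrt s)^CARD('q) * IGc TYPE('q))"
    unfolding IGc_def by (rule intG2[OF s]) (use A s in simp)
  also have "A / (sqrt s)^(CARD('q)+1) * (sqrt s)^CARD('q) * IGc TYPE('q) = A * IGc TYPE('q) / sqrt s"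
  proof -
    have g: "a / r^(n+1) * r^n * i = a * i / r" if "0 < r" for a r i :: real and n :: nat
      using that by (simp add: field_simps power_add)
    show ?thesis by (rule g) (use s in simp)
  qed
  finally show ?thesis .
qed

lemma term_inf:
  assumes t: "0 < t" "t \<le> s" and A: "0 \<le> A" and r: "0 \<le> \<rho>"
  shows "A / (sqrt s)^(N+1) * G \<rho> \<le> A * Gm / (sqrt t)^(N+1)"
proof -
  have "A / (sqrt s)^(N+1) \<le> A / (sqrt t)^(N+1)"
    using t A by (intro divide_left_mono power_mono mult_pos_pos zero_less_power) auto
  moreover have "G \<rho> \<le> Gm" unfolding Gm_def by (rule G_bound[OF r])
  ultimately have "A / (sqrt s)^(N+1) * G \<rho> \<le> A / (sqrt t)^(N+1) * Gm"
    using A t r G_nonneg[OF r] by (intro mult_mono) auto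
  thus ?thesis by simp
qed

lemma case_far:
  fixes x x' :: "real^'q::finite" and l :: 'q
  assumes t: "0 < t" "t \<le> t'" "t' \<le> K" and a: "0 < \<alpha>" "\<alpha> < real CARD('q)"
  shows "(\<integral>\<^sup>+ z. (\<integral>\<^sup>+ w. ennreal (
        \<bar>(heat_kernel_deriv t l (w - x) - heat_kernel_deriv t' l (w - x')) *
         (heat_kernel_deriv t l (z - x) - heat_kernel_deriv t' l (z - x'))\<bar>
        * (norm (w - z) powr (- \<alpha>) + 1)) \<partial>lborel) \<partial>lborel)
     \<le> ennreal (Cst \<alpha> K (2 * cc TYPE('q) * IGc TYPE('q)) (2 * cc TYPE('q) * Gm) TYPE('q) * t powr (-1 - \<alpha>/2))"
proof -
  define c where "c = cc TYPE('q)"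
  define IG where "IG = IGc TYPE('q)"
  define N where "N = CARD('q)"
  have c0: "0 \<le> c" unfolding c_def by (rule cc_nonneg)
  have IG0: "0 \<le> IG" unfolding IG_def by (rule IGc_nonneg)
  have t'0: "0 < t'" using t by simp
  define F where "F w = c / (sqrt t)^(N+1) * G (norm (w - x) / sqrt t) + c / (sqrt t')^(N+1) * G (norm (w - x') / sqrt t')" for w
  have Fm: "F \<in> borel_measurable borel" unfolding F_def by measurable
  have fF: "\<bar>heat_kernel_deriv t l (w - x) - heat_kernel_deriv t' l (w - x')\<bar> \<le> F w" for w
  proof -
    have "\<bar>heat_kernel_deriv t l (w - x) - heat_kernel_deriv t' l (w - x')\<bar>
        \<le> \<bar>heat_kernel_deriv t l (w - x)\<bar> + \<bar>heat_kernel_deriv t' l (w - x')\<bar>"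
      by (rule abs_triangle_ineq4)
    also have "\<dots> \<le> F w" unfolding F_def c_def N_def cc_def
      by (intro add_mono hkd_abs t t'0)
    finally show ?thesis .
  qed
  have Finf: "F w \<le> (2 * c * Gm) * 1 / (sqrt t)^(N+1)" for w
  proof -
    have "c / (sqrt t)^(N+1) * G (norm (w - x) / sqrt t) \<le> c * Gm / (sqrt t)^(N+1)"
      using t c0 by (intro term_inf) auto
    moreover have "c / (sqrt t')^(N+1) * G (norm (w - x') / sqrt t') \<le> c * Gm / (sqrt t)^(N+1)"
      using t c0 by (intro term_inf) auto
    ultimately have "F w \<le> c * Gm / (sqrt t)^(N+1) + c * Gm / (sqrt t)^(N+1)" unfolding F_def by (rule add_mono)
    also have "\<dots> = (2 * c * Gm) * 1 / (sqrt t)^(N+1)" by (simp add: divide_inverse algebra_simps)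
    finally show ?thesis .
  qed
  have F1: "(\<integral>\<^sup>+w. ennreal (F w) \<partial>lborel) \<le> ennreal ((2 * c * IG) * 1 / sqrt t)"
  proof -
    have "(\<integral>\<^sup>+w. ennreal (F w) \<partial>lborel) = (\<integral>\<^sup>+w. ennreal (c / (sqrt t)^(N+1) * G (norm (w - x) / sqrt t)) + ennreal (c / (sqrt t')^(N+1) * G (norm (w - x') / sqrt t')) \<partial>lborel)"
    proof (intro nn_integral_cong)
      fix w :: "real^'q"
      have nn1: "0 \<le> c / (sqrt t)^(N+1) * G (norm (w - x) / sqrt t)" using c0 t by (intro mult_nonneg_nonneg G_nonneg) auto
      have nn2: "0 \<le> c / (sqrt t')^(N+1) * G (norm (w - x') / sqrt t')" using c0 t'0 by (intro mult_nonneg_nonneg G_nonneg) auto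
      show "ennreal (F w) = ennreal (c / (sqrt t)^(N+1) * G (norm (w - x) / sqrt t)) + ennreal (c / (sqrt t')^(N+1) * G (norm (w - x') / sqrt t'))"
        unfolding F_def by (rule ennreal_plus[OF nn1 nn2])
    qed
    also have "\<dots> = (\<integral>\<^sup>+w. ennreal (c / (sqrt t)^(N+1) * G (norm (w - x) / sqrt t)) \<partial>lborel) + (\<integral>\<^sup>+w. ennreal (c / (sqrt t')^(N+1) * G (norm (w - x') / sqrt t')) \<partial>lborel)"
      by (rule nn_integral_add) measurable
    also have "\<dots> = ennreal (c * IG / sqrt t) + ennreal (c * IG / sqrt t')"
      unfolding N_def IG_def intG3[OF t(1) c0] intG3[OF t'0 c0] ..
    also have "\<dots> = ennreal (c * IG / sqrt t + c * IG / sqrt t')"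
      using c0 IG0 t t'0 by (simp add: ennreal_plus)
    also have "\<dots> \<le> ennreal ((2 * c * IG) * 1 / sqrt t)"
    proof (rule ennreal_leI)
      have le: "c * IG / sqrt t' \<le> c * IG / sqrt t" using c0 IG0 t by (intro divide_left_mono) auto
      have eq: "(2 * c * IG) * 1 / sqrt t = c * IG / sqrt t + c * IG / sqrt t" by (simp add: divide_inverse algebra_simps)
      show "c * IG / sqrt t + c * IG / sqrt t' \<le> (2 * c * IG) * 1 / sqrt t"
        unfolding eq by (rule add_left_mono[OF le])
    qed
    finally show ?thesis .
  qed
  have "(\<integral>\<^sup>+ z. (\<integral>\<^sup>+ w. ennreal (
        \<bar>(heat_kernel_deriv t l (w - x) - heat_kernel_deriv t' l (w - x')) *
         (heat_kernel_deriv t l (z - x) - heat_kernel_deriv t' l (z - x'))\<bar>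
        * (norm (w - z) powr (- \<alpha>) + 1)) \<partial>lborel) \<partial>lborel)
     \<le> ennreal (((1 + K powr (\<alpha>/2)) * (2 * c * IG)\<^sup>2 + (2 * c * IG) * (2 * c * Gm) * enn2real (IR \<alpha> TYPE('q))) * t powr (-1 - \<alpha>/2) * 1\<^sup>2)"
    by (rule assemble[OF Fm fF, unfolded N_def]) (use Finf F1 t a c0 IG0 Gm_nonneg in \<open>auto simp: N_def\<close>)
  thus ?thesis unfolding Cst_def c_def IG_def by simp
qed

lemma scale_le:
  fixes a X Y g \<sigma> :: real
  assumes "0 \<le> X" "0 \<le> Y" "0 \<le> g" "a \<le> \<sigma>"
  shows "a * X / Y * g \<le> \<sigma> * X / Y * g"
proof -
  have "a * X \<le> \<sigma> * X" by (rule mult_right_mono) (use assms in auto)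
  hence "a * X / Y \<le> \<sigma> * X / Y" by (rule divide_right_mono) (use assms in auto)
  thus ?thesis by (rule mult_right_mono) (use assms in auto)
qed

lemma case_near:
  fixes x x' :: "real^'q::finite" and l :: 'q
  assumes t: "0 < t" "t \<le> t'" "t' \<le> K" and a: "0 < \<alpha>" "\<alpha> < real CARD('q)"
    and near: "(norm (x - x'))\<^sup>2 + \<bar>t - t'\<bar> < t"
  shows "(\<integral>\<^sup>+ z. (\<integral>\<^sup>+ w. ennreal (
        \<bar>(heat_kernel_deriv t l (w - x) - heat_kernel_deriv t' l (w - x')) *
         (heat_kernel_deriv t l (z - x) - heat_kernel_deriv t' l (z - x'))\<bar>
        * (norm (w - z) powr (- \<alpha>) + 1)) \<partial>lborel) \<partial>lborel)
     \<le> ennreal (Cst \<alpha> K ((cc TYPE('q) * (real CARD('q) + 2) + 2 * exp (1/4) * cc TYPE('q)) * IGc TYPE('q))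
                       ((cc TYPE('q) * (real CARD('q) + 2) + 2 * exp (1/4) * cc TYPE('q)) * Gm) TYPE('q)
            * t powr (-1 - \<alpha>/2) * (((norm (x - x'))\<^sup>2 + \<bar>t - t'\<bar>) / t))"
proof -
  define c where "c = cc TYPE('q)"
  define IG where "IG = IGc TYPE('q)"
  define N where "N = CARD('q)"
  define X1 where "X1 = c * (real CARD('q) + 2)"
  define X2 where "X2 = 2 * exp (1/4) * c"
  define Ms where "Ms = X1 + X2"
  define D where "D = (norm (x - x'))\<^sup>2 + \<bar>t - t'\<bar>"
  define \<sigma> where "\<sigma> = sqrt (D / t)"
  have c0: "0 \<le> c" unfolding c_def by (rule cc_nonneg)
  have IG0: "0 \<le> IG" unfolding IG_def by (rule IGc_nonneg)
  have X10: "0 \<le> X1" unfolding X1_def using c0 by simp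
  have X20: "0 \<le> X2" unfolding X2_def using c0 by simp
  have Ms0: "0 \<le> Ms" unfolding Ms_def using X10 X20 by simp
  have D0: "0 \<le> D" unfolding D_def by simp
  have Dt: "D < t" using near unfolding D_def .
  have \<sigma>0: "0 \<le> \<sigma>" unfolding \<sigma>_def using D0 t(1) by simp
  have Dt0: "0 \<le> D / t" using D0 t(1) by simp
  have \<sigma>sq: "\<sigma>\<^sup>2 = D / t" unfolding \<sigma>_def using Dt0 by simp
  have t2: "t' \<le> 2 * t"
  proof -
    have "0 \<le> (norm (x - x'))\<^sup>2" by simp
    thus ?thesis using Dt t unfolding D_def by linarith
  qed
  have dn: "norm (x - x') \<le> sqrt t" using Dt unfolding D_def by (intro real_le_rsqrt) simp
  have sig1: "(t' - t) / t \<le> \<sigma>"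
  proof -
    have "(t' - t) / t \<le> D / t" using t unfolding D_def by (intro divide_right_mono) auto
    also have "D / t \<le> \<sigma>" unfolding \<sigma>_def
    proof (rule real_le_rsqrt)
      have "0 \<le> D / t" "D / t \<le> 1" using D0 Dt t by auto
      thus "(D / t)\<^sup>2 \<le> D / t" by (metis mult_left_le_one_le power2_eq_square)
    qed
    finally show ?thesis .
  qed
  have sig2: "norm (x - x') / sqrt t \<le> \<sigma>"
  proof -
    have "norm (x - x') / sqrt t = sqrt ((norm (x - x'))\<^sup>2 / t)" by (simp add: real_sqrt_divide)
    also have "\<dots> \<le> \<sigma>" unfolding \<sigma>_def D_def using t by (intro real_sqrt_le_mono divide_right_mono) auto
    finally show ?thesis .
  qed
  define F where "F w = (Ms * \<sigma>) / (sqrt t)^(N+1) * G (norm (w - x) / sqrt t)" for w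
  have Fm: "F \<in> borel_measurable borel" unfolding F_def by measurable
  have fF: "\<bar>heat_kernel_deriv t l (w - x) - heat_kernel_deriv t' l (w - x')\<bar> \<le> F w" for w
  proof -
    define y where "y = w - x"
    define d where "d = x - x'"
    have wy: "w - x' = y + d" unfolding y_def d_def by simp
    define g where "g = G (norm y / sqrt t)"
    have g0: "0 \<le> g" unfolding g_def using t by (intro G_nonneg) simp
    have Y0: "0 \<le> (sqrt t)^(N+1)" using t by simp
    have "\<bar>heat_kernel_deriv t l y - heat_kernel_deriv t' l (y + d)\<bar>
       \<le> \<bar>heat_kernel_deriv t l y - heat_kernel_deriv t' l y\<bar> + \<bar>heat_kernel_deriv t' l y - heat_kernel_deriv t' l (y + d)\<bar>"
      by linarith
    also have "\<dots> \<le> (t' - t) / t * X1 / (sqrt t)^(N+1) * g + norm d / sqrt t * X2 / (sqrt t)^(N+1) * g"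
    proof (rule add_mono)
      show "\<bar>heat_kernel_deriv t l y - heat_kernel_deriv t' l y\<bar> \<le> (t' - t) / t * X1 / (sqrt t)^(N+1) * g"
        unfolding X1_def c_def cc_def g_def N_def using time_diff[OF t(1,2) t2, of l y] .
      show "\<bar>heat_kernel_deriv t' l y - heat_kernel_deriv t' l (y + d)\<bar> \<le> norm d / sqrt t * X2 / (sqrt t)^(N+1) * g"
        unfolding X2_def c_def cc_def g_def N_def using space_diff[OF t(1,2) t2, of d l y] dn unfolding d_def by simp
    qed
    also have "\<dots> \<le> \<sigma> * X1 / (sqrt t)^(N+1) * g + \<sigma> * X2 / (sqrt t)^(N+1) * g"
      by (intro add_mono scale_le X10 X20 Y0 g0 sig1) (use sig2 in \<open>simp add: d_def\<close>)
    also have "\<dots> = F w" unfolding F_def Ms_def g_def y_def by (simp add: divide_inverse algebra_simps)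
    finally show ?thesis unfolding y_def wy[unfolded y_def] .
  qed
  have Finf: "F w \<le> (Ms * Gm) * \<sigma> / (sqrt t)^(N+1)" for w
  proof -
    have "F w \<le> (Ms * \<sigma>) * Gm / (sqrt t)^(N+1)" unfolding F_def
      using t Ms0 \<sigma>0 by (intro term_inf) auto
    thus ?thesis by (simp add: mult_ac)
  qed
  have F1: "(\<integral>\<^sup>+w. ennreal (F w) \<partial>lborel) \<le> ennreal ((Ms * IG) * \<sigma> / sqrt t)"
  proof -
    have "(\<integral>\<^sup>+w. ennreal (F w) \<partial>lborel) = ennreal (Ms * \<sigma> * IGc TYPE('q) / sqrt t)"
      unfolding F_def N_def by (rule intG3[OF t(1)]) (use Ms0 \<sigma>0 in simp)
    thus ?thesis unfolding IG_def by (simp add: mult_ac)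
  qed
  have "(\<integral>\<^sup>+ z. (\<integral>\<^sup>+ w. ennreal (
        \<bar>(heat_kernel_deriv t l (w - x) - heat_kernel_deriv t' l (w - x')) *
         (heat_kernel_deriv t l (z - x) - heat_kernel_deriv t' l (z - x'))\<bar>
        * (norm (w - z) powr (- \<alpha>) + 1)) \<partial>lborel) \<partial>lborel)
     \<le> ennreal (((1 + K powr (\<alpha>/2)) * (Ms * IG)\<^sup>2 + (Ms * IG) * (Ms * Gm) * enn2real (IR \<alpha> TYPE('q))) * t powr (-1 - \<alpha>/2) * \<sigma>\<^sup>2)"
    by (rule assemble[OF Fm fF, unfolded N_def]) (use Finf F1 t a \<sigma>0 Ms0 IG0 Gm_nonneg in \<open>auto simp: N_def\<close>)
  thus ?thesis unfolding Cst_def c_def IG_def Ms_def X1_def X2_def \<sigma>sq D_def by simp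
qed

theorem lemma4p3:
  fixes \<alpha> K :: real and l :: "'q::finite"
  assumes "0 < \<alpha>" and "\<alpha> < real CARD('q)" and "0 \<le> K"
  shows "\<exists>C::real. \<forall>(x::real^'q) x' t t'. 0 < t \<and> t \<le> t' \<and> t' \<le> K \<longrightarrow>
     (\<integral>\<^sup>+ z. (\<integral>\<^sup>+ w. ennreal (
        \<bar>(heat_kernel_deriv t l (w - x) - heat_kernel_deriv t' l (w - x')) *
         (heat_kernel_deriv t l (z - x) - heat_kernel_deriv t' l (z - x'))\<bar>
        * (norm (w - z) powr (- \<alpha>) + 1)) \<partial>lborel) \<partial>lborel)
     \<le> ennreal (C * t powr (-1 - \<alpha> / 2) * min 1 (((norm (x - x'))\<^sup>2 + \<bar>t - t'\<bar>) / t))"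
proof -
  define Ms where "Ms = cc TYPE('q) * (real CARD('q) + 2) + 2 * exp (1/4) * cc TYPE('q)"
  define C1 where "C1 = Cst \<alpha> K (2 * cc TYPE('q) * IGc TYPE('q)) (2 * cc TYPE('q) * Gm) TYPE('q)"
  define C2 where "C2 = Cst \<alpha> K (Ms * IGc TYPE('q)) (Ms * Gm) TYPE('q)"
  have Ms0: "0 \<le> Ms" unfolding Ms_def using cc_nonneg[where 'q='q] by simp
  have C10: "0 \<le> C1" unfolding C1_def
    using cc_nonneg[where 'q='q] IGc_nonneg[where 'q='q] Gm_nonneg by (intro Cst_nonneg) auto
  have C20: "0 \<le> C2" unfolding C2_def
    using Ms0 IGc_nonneg[where 'q='q] Gm_nonneg by (intro Cst_nonneg) auto
  show ?thesis
  proof (rule exI[of _ "C1 + C2"], intro allI impI)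
    fix x x' :: "real^'q" and t t' :: real
    assume H: "0 < t \<and> t \<le> t' \<and> t' \<le> K"
    hence t: "0 < t" "t \<le> t'" "t' \<le> K" by auto
    define D where "D = (norm (x - x'))\<^sup>2 + \<bar>t - t'\<bar>"
    have D0: "0 \<le> D" unfolding D_def by simp
    have tp0: "0 \<le> t powr (-1 - \<alpha> / 2)" by simp
    show "(\<integral>\<^sup>+ z. (\<integral>\<^sup>+ w. ennreal (
        \<bar>(heat_kernel_deriv t l (w - x) - heat_kernel_deriv t' l (w - x')) *
         (heat_kernel_deriv t l (z - x) - heat_kernel_deriv t' l (z - x'))\<bar>
        * (norm (w - z) powr (- \<alpha>) + 1)) \<partial>lborel) \<partial>lborel)
     \<le> ennreal ((C1 + C2) * t powr (-1 - \<alpha> / 2) * min 1 (((norm (x - x'))\<^sup>2 + \<bar>t - t'\<bar>) / t))"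
    proof (cases "D < t")
      case True
      have m: "min 1 (D / t) = D / t" using True t D0 by simp
      have Dt0: "0 \<le> D / t" using D0 t by simp
      have "(\<integral>\<^sup>+ z. (\<integral>\<^sup>+ w. ennreal (
        \<bar>(heat_kernel_deriv t l (w - x) - heat_kernel_deriv t' l (w - x')) *
         (heat_kernel_deriv t l (z - x) - heat_kernel_deriv t' l (z - x'))\<bar>
        * (norm (w - z) powr (- \<alpha>) + 1)) \<partial>lborel) \<partial>lborel)
          \<le> ennreal (C2 * t powr (-1 - \<alpha>/2) * (D / t))"
        using case_near[OF t assms(1,2) True[unfolded D_def], where l=l] unfolding C2_def Ms_def D_def .
      also have "\<dots> \<le> ennreal ((C1 + C2) * t powr (-1 - \<alpha> / 2) * min 1 (D / t))"
        unfolding m using C10 tp0 Dt0 by (intro ennreal_leI mult_right_mono) auto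
      finally show ?thesis unfolding D_def .
    next
      case False
      have m: "min 1 (D / t) = 1" using False t by simp
      have "(\<integral>\<^sup>+ z. (\<integral>\<^sup>+ w. ennreal (
        \<bar>(heat_kernel_deriv t l (w - x) - heat_kernel_deriv t' l (w - x')) *
         (heat_kernel_deriv t l (z - x) - heat_kernel_deriv t' l (z - x'))\<bar>
        * (norm (w - z) powr (- \<alpha>) + 1)) \<partial>lborel) \<partial>lborel)
          \<le> ennreal (C1 * t powr (-1 - \<alpha>/2))"
        using case_far[OF t assms(1,2), where x=x and x'=x' and l=l] unfolding C1_def .
      also have "\<dots> \<le> ennreal ((C1 + C2) * t powr (-1 - \<alpha> / 2) * min 1 (D / t))"
        unfolding m using C20 tp0 by (intro ennreal_leI) (simp add: mult_right_mono)
      finally show ?thesis unfolding D_def .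
    qed
  qed
qed


end
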